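(* Let $r_i,n_i,k_{ij}$ ($i,j\in[d]$) be integers with $r_i\ge0$, $r_1+\dots+r_d\ge1$, $k_{ij}\ge0$ for $i\ne j$, $-k_{jj}=r_j+\sum_{i\ne j}k_{ij}$ for all $j$, $n_i\ge-k_{ii}$ and $-k_{ii}>0$ for all $i$; put $k'_{ii}=n_i+k_{ii}$ and $k'_{ij}=k_{ij}$ for $i\ne j$. Let $\mathrm U=\prod_{i=1}^d\{0,1,\dots,n_i\}$ and let $\mathrm N=(N_{i,\mathrm u})_{i\in[d],\mathrm u\in\mathrm U}$ be nonnegative integers with $n_i=\sum_{\mathrm u\in\mathrm U}N_{i,\mathrm u}$ and $k'_{ij}=\sum_{\mathrm u\in\mathrm U}u_jN_{i,\mathrm u}$ for $i,j\in[d]$. Let $\mathcal F_d^{k_{ij},\mathrm n}(\mathrm N)$ be the set of $d$-type plane forests with $n_i$ vertices of type $i$, $r_i$ roots of type $i$, exactly $k_{ij}$ vertices of type $j$ with a parent of type $i$ for $i\ne j$, and exactly $N_{i,\mathrm u}$ vertices of type $i$ with indegree type $\mathrm u$ for every $i\in[d]$, $\mathrm u\in\mathrm U$. Then $$\left|\mathcal F_d^{k_{ij},\mathrm n}(\mathrm N)\right|=\frac{\prod_{j=1}^d(n_j-1)!\,\det(-k_{ij})}{\prod_{i\in[d],\mathrm u\in\mathrm U}N_{i,\mathrm u}!}.$$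
   Context: $d\ge2$, $[d]=\{1,\dots,d\}$. A $d$-type plane forest is a finite sequence of finite rooted plane (ordered) trees whose vertices each carry a type in $[d]$, such that children of a common parent appear from left to right in nondecreasing order of type; forests are unlabeled (counted up to isomorphism preserving tree order, planar order and types). A vertex has indegree type $\mathrm u=(u_1,\dots,u_d)$ if it has exactly $u_j$ children of type $j$ for each $j\in[d]$.
   Formalization: In a d-type plane forest the roots, like the children of a common parent, also appear from left to right in nondecreasing order of type, not in arbitrary order. The statement above fails without it. *)

theory Defs
  imports Main "Jordan_Normal_Form.Determinant"
begin

text \<open>Plane trees have no
  nontrivial automorphisms, so unlabeled plane trees are exactly values of this
  datatype.\<close>

datatype ptree = Node nat "ptree list"

fun root_type :: "ptree \<Rightarrow> nat" where
  "root_type (Node t cs) = t"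

fun children :: "ptree \<Rightarrow> ptree list" where
  "children (Node t cs) = cs"

fun wf_tree :: "nat \<Rightarrow> ptree \<Rightarrow> bool" where
  "wf_tree d (Node t cs) =
     (t \<in> {1..d} \<and> sorted (map root_type cs) \<and> (\<forall>c\<in>set cs. wf_tree d c))"

text \<open>All vertices of a tree (each vertex represented by the subtree rooted at it).\<close>
fun subtrees :: "ptree \<Rightarrow> ptree list" where
  "subtrees (Node t cs) = Node t cs # concat (map subtrees cs)"

type_synonym pforest = "ptree list"

text \<open>A d-type plane forest; the roots are (like children of a common virtual
  parent) listed in nondecreasing order of type.\<close>
definition wf_forest :: "nat \<Rightarrow> pforest \<Rightarrow> bool" where
  "wf_forest d F = ((\<forall>T\<in>set F. wf_tree d T) \<and> sorted (map root_type F))"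

definition vertices :: "pforest \<Rightarrow> ptree list" where
  "vertices F = concat (map subtrees F)"

definition num_vertices_of_type :: "pforest \<Rightarrow> nat \<Rightarrow> nat" where
  "num_vertices_of_type F i = length (filter (\<lambda>v. root_type v = i) (vertices F))"

definition num_roots_of_type :: "pforest \<Rightarrow> nat \<Rightarrow> nat" where
  "num_roots_of_type F i = length (filter (\<lambda>T. root_type T = i) F)"

definition num_edges :: "pforest \<Rightarrow> nat \<Rightarrow> nat \<Rightarrow> nat" where
  "num_edges F i j =
     sum_list (map (\<lambda>v. length (filter (\<lambda>c. root_type c = j) (children v)))
                   (filter (\<lambda>v. root_type v = i) (vertices F)))"

text \<open>Indegree type of a vertex: u j = number of children of type j (0 for j outside [d]
  in a well-formed tree).\<close>
definition indeg_type :: "ptree \<Rightarrow> (nat \<Rightarrow> nat)" where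
  "indeg_type v = (\<lambda>j. length (filter (\<lambda>c. root_type c = j) (children v)))"

definition num_vertices_indeg :: "pforest \<Rightarrow> nat \<Rightarrow> (nat \<Rightarrow> nat) \<Rightarrow> nat" where
  "num_vertices_indeg F i u =
     length (filter (\<lambda>v. root_type v = i \<and> indeg_type v = u) (vertices F))"

text \<open>U = prod_{i=1}^d {0..n_i}, as functions vanishing outside [d].\<close>
definition indeg_box :: "nat \<Rightarrow> (nat \<Rightarrow> nat) \<Rightarrow> (nat \<Rightarrow> nat) set" where
  "indeg_box d n = {u. (\<forall>j. j \<notin> {1..d} \<longrightarrow> u j = 0) \<and> (\<forall>j\<in>{1..d}. u j \<le> n j)}"

definition forest_class ::
  "nat \<Rightarrow> (nat \<Rightarrow> nat) \<Rightarrow> (nat \<Rightarrow> nat) \<Rightarrow> (nat \<Rightarrow> nat \<Rightarrow> int) \<Rightarrow> (nat \<Rightarrow> (nat \<Rightarrow> nat) \<Rightarrow> nat)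
     \<Rightarrow> pforest set" where
  "forest_class d n r k N = {F. wf_forest d F \<and>
     (\<forall>i\<in>{1..d}. num_vertices_of_type F i = n i) \<and>
     (\<forall>i\<in>{1..d}. num_roots_of_type F i = r i) \<and>
     (\<forall>i\<in>{1..d}. \<forall>j\<in>{1..d}. i \<noteq> j \<longrightarrow> int (num_edges F i j) = k i j) \<and>
     (\<forall>i\<in>{1..d}. \<forall>u\<in>indeg_box d n. num_vertices_indeg F i u = N i u)}"

definition kprime :: "(nat \<Rightarrow> nat) \<Rightarrow> (nat \<Rightarrow> nat \<Rightarrow> int) \<Rightarrow> nat \<Rightarrow> nat \<Rightarrow> int" where
  "kprime n k i j = (if i = j then int (n i) + k i i else k i j)"

end

theory Submission imports Defs begin

section \<open>Determinant lemmas\<close>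

definition repl :: "'a mat \<Rightarrow> nat \<Rightarrow> (nat \<Rightarrow> 'a) \<Rightarrow> 'a mat" where
  "repl A t v = mat (dim_row A) (dim_col A) (\<lambda>(i,j). if i = t then v j else A $$ (i,j))"

lemma repl_carrier: "A \<in> carrier_mat n n \<Longrightarrow> repl A t v \<in> carrier_mat n n"
  unfolding repl_def by auto

lemma cofactor_repl:
  assumes A: "A \<in> carrier_mat n n" and t: "t < n" and j: "j < n"
  shows "cofactor (repl A t v) t j = cofactor A t j"
proof -
  have "mat_delete (repl A t v) t j = mat_delete A t j"
    by (rule eq_matI) (use A t j in \<open>auto simp: mat_delete_def repl_def\<close>)
  thus ?thesis unfolding cofactor_def by simp
qed

lemma det_repl:
  assumes A: "(A::'a::comm_ring_1 mat) \<in> carrier_mat n n" and t: "t < n"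
  shows "det (repl A t v) = (\<Sum>j<n. v j * cofactor A t j)"
proof -
  have "det (repl A t v) = (\<Sum>j<n. repl A t v $$ (t,j) * cofactor (repl A t v) t j)"
    by (rule laplace_expansion_row[OF repl_carrier[OF A] t])
  also have "\<dots> = (\<Sum>j<n. v j * cofactor A t j)"
  proof (rule sum.cong[OF refl])
    fix j assume "j \<in> {..<n}"
    hence j: "j < n" by simp
    have "repl A t v $$ (t,j) = v j" using A t j by (simp add: repl_def)
    thus "repl A t v $$ (t,j) * cofactor (repl A t v) t j = v j * cofactor A t j"
      using cofactor_repl[OF A t j] by simp
  qed
  finally show ?thesis .
qed

lemma det_row_expand:
  assumes A: "(A::'a::comm_ring_1 mat) \<in> carrier_mat n n" and t: "t < n"
  shows "det A = (\<Sum>j<n. A $$ (t,j) * cofactor A t j)"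
  by (rule laplace_expansion_row[OF A t])

lemma det_rows_sum_zero:
  assumes A: "(A::'a::comm_ring_1 mat) \<in> carrier_mat n n" and S: "S \<subseteq> {..<n}" and t: "t \<in> S"
    and z: "\<And>j. j < n \<Longrightarrow> (\<Sum>i\<in>S. A $$ (i,j)) = 0"
  shows "det A = 0"
proof -
  have tn: "t < n" using S t by auto
  have fS: "finite S" using S finite_subset by blast
  have row: "A $$ (t,j) = - (\<Sum>i\<in>S-{t}. A $$ (i,j))" if "j < n" for j
    using z[OF that] sum.remove[OF fS t, of "\<lambda>i. A $$ (i,j)"] by (simp add: eq_neg_iff_add_eq_0)
  have zero: "det (repl A t (\<lambda>j. A $$ (i,j))) = 0" if "i \<in> S - {t}" for i
  proof (rule det_identical_rows[OF repl_carrier[OF A], of t i])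
    show "t \<noteq> i" using that by auto
    show "t < n" by fact
    show "i < n" using that S by auto
    show "row (repl A t (\<lambda>j. A $$ (i, j))) t = row (repl A t (\<lambda>j. A $$ (i, j))) i"
      using A that tn \<open>i < n\<close> by (auto simp: repl_def row_def)
  qed
  have "det A = (\<Sum>j<n. A $$ (t,j) * cofactor A t j)" by (rule det_row_expand[OF A tn])
  also have "\<dots> = (\<Sum>j<n. - (\<Sum>i\<in>S-{t}. A $$ (i,j) * cofactor A t j))"
    by (rule sum.cong) (auto simp: row sum_distrib_right)
  also have "\<dots> = - (\<Sum>i\<in>S-{t}. \<Sum>j<n. A $$ (i,j) * cofactor A t j)"
    by (simp add: sum_negf sum.swap[of _ "S-{t}"])
  also have "\<dots> = - (\<Sum>i\<in>S-{t}. det (repl A t (\<lambda>j. A $$ (i,j))))"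
    by (simp add: det_repl[OF A tn])
  also have "\<dots> = 0" using zero by simp
  finally show ?thesis .
qed

lemma det_unit_col:
  assumes A: "(A::'a::comm_ring_1 mat) \<in> carrier_mat n n" and B: "B \<in> carrier_mat n n" and t: "t < n"
    and cA: "\<And>i. i < n \<Longrightarrow> A $$ (i,t) = (if i = t then 1 else 0)"
    and cB: "\<And>i. i < n \<Longrightarrow> B $$ (i,t) = (if i = t then 1 else 0)"
    and rows: "\<And>i j. i < n \<Longrightarrow> j < n \<Longrightarrow> i \<noteq> t \<Longrightarrow> A $$ (i,j) = B $$ (i,j)"
  shows "det A = det B"
proof -
  have "det A = (\<Sum>i<n. A $$ (i,t) * cofactor A i t)" by (rule laplace_expansion_column[OF A t])
  also have "\<dots> = (\<Sum>i<n. if i = t then cofactor A t t else 0)"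
    by (rule sum.cong) (auto simp: cA)
  also have "\<dots> = cofactor A t t" using t by simp
  also have "\<dots> = cofactor B t t"
  proof -
    have "mat_delete A t t = mat_delete B t t"
      by (rule eq_matI) (use A B t rows in \<open>auto simp: mat_delete_def\<close>)
    thus ?thesis unfolding cofactor_def by simp
  qed
  also have "\<dots> = (\<Sum>i<n. if i = t then cofactor B t t else 0)" using t by simp
  also have "\<dots> = (\<Sum>i<n. B $$ (i,t) * cofactor B i t)"
    by (rule sum.cong) (auto simp: cB)
  also have "\<dots> = det B" by (rule laplace_expansion_column[OF B t, symmetric])
  finally show ?thesis .
qed

definition Mt :: "nat \<Rightarrow> (nat \<Rightarrow> nat) \<Rightarrow> (nat \<Rightarrow> nat \<Rightarrow> nat) \<Rightarrow> int mat" where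
  "Mt d nn E = mat d d (\<lambda>(i,j). (if i = j then int (nn (Suc i)) else 0) - int (E (Suc i) (Suc j))
       + (if i = j \<and> nn (Suc i) = 0 then 1 else 0))"

lemma Mt_carrier: "Mt d nn E \<in> carrier_mat d d" by (simp add: Mt_def)

lemma Mt_index: "i < d \<Longrightarrow> j < d \<Longrightarrow> Mt d nn E $$ (i,j) = (if i = j then int (nn (Suc i)) else 0) - int (E (Suc i) (Suc j))
       + (if i = j \<and> nn (Suc i) = 0 then 1 else 0)"
  by (simp add: Mt_def)

lemma Mt_rec_big:
  fixes U :: "(nat \<Rightarrow> nat) set" and c :: "(nat \<Rightarrow> nat) \<Rightarrow> nat"
  assumes t1: "1 \<le> t" and td: "t \<le> d" and fU: "finite U"
    and le: "\<And>u j. u \<in> U \<Longrightarrow> u j \<le> E t j"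
    and sc: "(\<Sum>u\<in>U. c u) = nn t"
    and sE: "\<And>j. (\<Sum>u\<in>U. c u * u j) = E t j"
    and n2: "nn t \<ge> 2"
  shows "(\<Sum>u\<in>U. int (c u) * det (Mt d (nn(t := nn t - 1)) (E(t := \<lambda>j. E t j - u j))))
     = int (nn t - 1) * det (Mt d nn E)"
proof -
  define A where "A = Mt d nn E"
  define t0 where "t0 = t - 1"
  have A: "A \<in> carrier_mat d d" by (simp add: A_def Mt_carrier)
  have t0: "t0 < d" and St0: "Suc t0 = t" using t1 td by (auto simp: t0_def)
  define C where "C j = cofactor A t0 j" for j
  have At0: "A $$ (t0,j) = (if t0 = j then int (nn t) else 0) - int (E t (Suc j))" if "j < d" for j
    using that t0 n2 St0 by (cases "t0 = j") (auto simp: A_def Mt_index)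
  have eqm: "Mt d (nn(t := nn t - 1)) (E(t := \<lambda>j. E t j - u j))
      = repl A t0 (\<lambda>j. A $$ (t0,j) + int (u (Suc j)) - (if j = t0 then 1 else 0))" if u: "u \<in> U" for u
  proof (rule eq_matI)
    fix i j assume i: "i < dim_row (repl A t0 (\<lambda>j. A $$ (t0,j) + int (u (Suc j)) - (if j = t0 then 1 else 0)))"
      and j: "j < dim_col (repl A t0 (\<lambda>j. A $$ (t0,j) + int (u (Suc j)) - (if j = t0 then 1 else 0)))"
    have i': "i < d" and j': "j < d" using i j A by (auto simp: repl_def)
    show "Mt d (nn(t := nn t - 1)) (E(t := \<lambda>j. E t j - u j)) $$ (i, j) =
          repl A t0 (\<lambda>j. A $$ (t0,j) + int (u (Suc j)) - (if j = t0 then 1 else 0)) $$ (i, j)"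
    proof (cases "i = t0")
      case True
      have "u (Suc j) \<le> E t (Suc j)" using le[OF u] .
      then show ?thesis using True i' j' A n2 St0 At0[OF j']
        by (auto simp: Mt_index repl_def of_nat_diff)
    next
      case False
      hence "Suc i \<noteq> t" using St0 by auto
      then show ?thesis using False i' j' A by (auto simp: Mt_index repl_def A_def)
    qed
  qed (use A in \<open>auto simp: repl_def Mt_def\<close>)
  have "(\<Sum>u\<in>U. int (c u) * det (Mt d (nn(t := nn t - 1)) (E(t := \<lambda>j. E t j - u j))))
     = (\<Sum>u\<in>U. int (c u) * (\<Sum>j<d. (A $$ (t0,j) + int (u (Suc j)) - (if j = t0 then 1 else 0)) * C j))"
  proof (rule sum.cong[OF refl])
    fix u assume u: "u \<in> U"
    show "int (c u) * det (Mt d (nn(t := nn t - 1)) (E(t := \<lambda>j. E t j - u j))) =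
      int (c u) * (\<Sum>j<d. (A $$ (t0,j) + int (u (Suc j)) - (if j = t0 then 1 else 0)) * C j)"
      unfolding eqm[OF u] det_repl[OF A t0] C_def ..
  qed
  also have "\<dots> = (\<Sum>j<d. (\<Sum>u\<in>U. int (c u) * (A $$ (t0,j) + int (u (Suc j)) - (if j = t0 then 1 else 0))) * C j)"
    by (simp add: sum_distrib_left sum_distrib_right sum.swap[of _ U] mult.assoc)
  also have "\<dots> = (\<Sum>j<d. (int (nn t - 1) * A $$ (t0,j)) * C j)"
  proof (rule sum.cong[OF refl])
    fix j assume "j \<in> {..<d}"
    hence j: "j < d" by simp
    have "(\<Sum>u\<in>U. int (c u) * (A $$ (t0,j) + int (u (Suc j)) - (if j = t0 then 1 else 0)))
       = (\<Sum>u\<in>U. int (c u)) * (A $$ (t0,j) - (if j = t0 then 1 else 0)) + (\<Sum>u\<in>U. int (c u * u (Suc j)))"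
    proof -
      define a where "a = A $$ (t0,j) - (if j = t0 then 1 else (0::int))"
      have "(\<Sum>u\<in>U. int (c u) * (A $$ (t0,j) + int (u (Suc j)) - (if j = t0 then 1 else 0)))
          = (\<Sum>u\<in>U. int (c u) * a + int (c u * u (Suc j)))"
        by (rule sum.cong) (simp_all add: a_def algebra_simps)
      also have "\<dots> = (\<Sum>u\<in>U. int (c u)) * a + (\<Sum>u\<in>U. int (c u * u (Suc j)))"
        by (simp add: sum.distrib sum_distrib_right)
      finally show ?thesis by (simp add: a_def)
    qed
    also have "\<dots> = int (nn t) * (A $$ (t0,j) - (if j = t0 then 1 else 0)) + int (E t (Suc j))"
      by (simp only: of_nat_sum[symmetric] sc sE)
    also have "\<dots> = int (nn t - 1) * A $$ (t0,j)"
      using At0[OF j] n2 by (auto simp: algebra_simps of_nat_diff)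
    finally show "(\<Sum>u\<in>U. int (c u) * (A $$ (t0,j) + int (u (Suc j)) - (if j = t0 then 1 else 0))) * C j
       = (int (nn t - 1) * A $$ (t0,j)) * C j" by simp
  qed
  also have "\<dots> = int (nn t - 1) * det A"
    by (simp add: det_row_expand[OF A t0] C_def sum_distrib_left mult.assoc)
  finally show ?thesis by (simp add: A_def)
qed

lemma Mt_rec_one:
  assumes t1: "1 \<le> t" and td: "t \<le> d"
    and n1: "nn t = 1" and col: "\<And>i. E i t = 0"
    and Et: "\<And>j. u j \<le> E t j"
  shows "det (Mt d (nn(t := 0)) (E(t := \<lambda>j. E t j - u j))) = det (Mt d nn E)"
proof -
  define t0 where "t0 = t - 1"
  have t0: "t0 < d" and St0: "Suc t0 = t" using t1 td by (auto simp: t0_def)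
  show ?thesis
  proof (rule det_unit_col[OF Mt_carrier Mt_carrier t0])
    fix i assume i: "i < d"
    show "Mt d (nn(t := 0)) (E(t := \<lambda>j. E t j - u j)) $$ (i, t0) = (if i = t0 then 1 else 0)"
      using i t0 St0 col[of t] col[of "Suc i"] by (auto simp: Mt_index)
    show "Mt d nn E $$ (i, t0) = (if i = t0 then 1 else 0)"
      using i t0 St0 n1 col[of t] col[of "Suc i"] by (auto simp: Mt_index)
  next
    fix i j assume "i < d" "j < d" "i \<noteq> t0"
    moreover hence "Suc i \<noteq> t" using St0 by auto
    ultimately show "Mt d (nn(t := 0)) (E(t := \<lambda>j. E t j - u j)) $$ (i, j) = Mt d nn E $$ (i, j)"
      by (simp add: Mt_index)
  qed
qed

lemma Mt_det_zero:
  assumes bal: "\<And>j. 1 \<le> j \<Longrightarrow> j \<le> d \<Longrightarrow> nn j = (\<Sum>i=1..d. E i j)"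
    and emp: "\<And>i j. nn i = 0 \<Longrightarrow> E i j = 0"
    and t1: "1 \<le> t" and td: "t \<le> d" and pos: "nn t > 0"
  shows "det (Mt d nn E) = 0"
proof (rule det_rows_sum_zero[OF Mt_carrier, where S="{i. i < d \<and> nn (Suc i) > 0}" and t="t - 1"])
  show "{i. i < d \<and> 0 < nn (Suc i)} \<subseteq> {..<d}" by auto
  show "t - 1 \<in> {i. i < d \<and> 0 < nn (Suc i)}" using t1 td pos by auto
next
  fix j assume j: "j < d"
  define g where "g i = (if i = j then int (nn (Suc j)) else 0) - int (E (Suc i) (Suc j))" for i
  have "(\<Sum>i\<in>{i. i < d \<and> 0 < nn (Suc i)}. Mt d nn E $$ (i, j))
      = (\<Sum>i\<in>{..<d}. if 0 < nn (Suc i) then Mt d nn E $$ (i, j) else 0)"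
    by (simp add: sum.inter_filter[symmetric] Collect_conj_eq lessThan_def Int_commute)
  also have "\<dots> = (\<Sum>i\<in>{..<d}. g i)"
    by (rule sum.cong) (use j emp in \<open>auto simp: Mt_index g_def\<close>)
  also have "\<dots> = int (nn (Suc j)) - int (\<Sum>i<d. E (Suc i) (Suc j))"
    using j by (simp add: g_def sum.distrib sum_subtractf)
  also have "(\<Sum>i<d. E (Suc i) (Suc j)) = nn (Suc j)"
    using bal[of "Suc j"] j by (simp add: sum.atLeast1_atMost_eq)
  finally show "(\<Sum>i\<in>{i. i < d \<and> 0 < nn (Suc i)}. Mt d nn E $$ (i, j)) = 0" by simp
qed

lemma sorted_split:
  "sorted (map f xs) \<Longrightarrow> filter (\<lambda>x. f x < c) xs @ filter (\<lambda>x. \<not> f x < c) xs = xs"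
proof (induction xs)
  case (Cons x xs)
  show ?case
  proof (cases "f x < c")
    case True then show ?thesis using Cons by auto
  next
    case False
    hence "\<forall>y\<in>set xs. \<not> f y < c" using Cons.prems by fastforce
    then show ?thesis using False by (simp add: filter_empty_conv)
  qed
qed simp

lemma concat_blocks:
  "sorted (map f xs) \<Longrightarrow> \<forall>x\<in>set xs. a \<le> f x \<and> f x < b
    \<Longrightarrow> concat (map (\<lambda>j. filter (\<lambda>x. f x = j) xs) [a..<b]) = xs"
proof (induction b arbitrary: xs)
  case 0 then show ?case by auto
next
  case (Suc b)
  show ?case
  proof (cases "a \<le> b")
    case False
    hence "xs = []" using Suc.prems(2) by (cases xs) auto
    then show ?thesis by simp
  next
    case True
    define ys where "ys = filter (\<lambda>x. f x < b) xs"
    have sy: "sorted (map f ys)" unfolding ys_def using Suc.prems(1) by (rule sorted_filter)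
    have IH: "concat (map (\<lambda>j. filter (\<lambda>x. f x = j) ys) [a..<b]) = ys"
      using Suc.IH[OF sy] Suc.prems(2) unfolding ys_def by auto
    have fy: "filter (\<lambda>x. f x = j) ys = filter (\<lambda>x. f x = j) xs" if "j \<in> set [a..<b]" for j
      using that unfolding ys_def by (auto intro: filter_cong)
    have "concat (map (\<lambda>j. filter (\<lambda>x. f x = j) xs) [a..<b]) = ys"
    proof -
      have "map (\<lambda>j. filter (\<lambda>x. f x = j) xs) [a..<b] = map (\<lambda>j. filter (\<lambda>x. f x = j) ys) [a..<b]"
        using fy by (intro map_cong) auto
      then have "concat (map (\<lambda>j. filter (\<lambda>x. f x = j) xs) [a..<b]) = concat (map (\<lambda>j. filter (\<lambda>x. f x = j) ys) [a..<b])"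
        by (rule arg_cong)
      then show ?thesis using IH by (rule trans)
    qed
    moreover have "filter (\<lambda>x. \<not> f x < b) xs = filter (\<lambda>x. f x = b) xs"
      using Suc.prems(2) by (intro filter_cong) auto
    ultimately have "concat (map (\<lambda>j. filter (\<lambda>x. f x = j) xs) [a..<b]) @ filter (\<lambda>x. f x = b) xs = xs"
      using sorted_split[OF Suc.prems(1), of b] unfolding ys_def by simp
    then show ?thesis using True by simp
  qed
qed

lemma sorted_const: "\<forall>x\<in>set l. f x = (b::nat) \<Longrightarrow> sorted (map f l)"
  by (induction l) auto

lemma set_concat_blocks:
  assumes "\<And>j x. x \<in> set (g j) \<Longrightarrow> f x = j"
  shows "x \<in> set (concat (map g [a..<b])) \<Longrightarrow> a \<le> f x \<and> f x < b"
  using assms by auto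

lemma sorted_concat_blocks:
  assumes "\<And>j x. x \<in> set (g j) \<Longrightarrow> f x = (j::nat)"
  shows "sorted (map f (concat (map g [a..<b])))"
proof (induction b)
  case (Suc b)
  show ?case
  proof (cases "a \<le> b")
    case True
    have "sorted (map f (g b))" using assms by (intro sorted_const) auto
    moreover have "\<forall>x\<in>set (concat (map g [a..<b])). \<forall>y\<in>set (g b). f x \<le> f y"
    proof (intro ballI)
      fix x y assume x: "x \<in> set (concat (map g [a..<b]))" and y: "y \<in> set (g b)"
      from x obtain j where "j \<in> set [a..<b]" "x \<in> set (g j)" by auto
      then show "f x \<le> f y" using assms[of x j] assms[of y b] y by auto
    qed
    ultimately show ?thesis using Suc True by (auto simp: sorted_append)
  qed simp
qed simp

lemma filter_concat_blocks:
  assumes "\<And>j x. x \<in> set (g j) \<Longrightarrow> f x = (j::nat)" and "a \<le> j" "j < b"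
  shows "filter (\<lambda>x. f x = j) (concat (map g [a..<b])) = g j"
  using assms(2,3)
proof (induction b)
  case (Suc b)
  have fg: "filter (\<lambda>x. f x = j) (g b) = (if j = b then g b else [])"
    using assms(1)[of _ b] by (auto simp: filter_empty_conv)
  show ?case
  proof (cases "j = b")
    case True
    have "filter (\<lambda>x. f x = j) (concat (map g [a..<b])) = []"
    proof -
      have "\<forall>x\<in>set (concat (map g [a..<b])). f x \<noteq> j"
      proof
        fix x assume x: "x \<in> set (concat (map g [a..<b]))"
        from x obtain j' where "j' \<in> set [a..<b]" "x \<in> set (g j')" by auto
        then show "f x \<noteq> j" using assms(1)[of x j'] True by auto
      qed
      then show ?thesis by (simp add: filter_empty_conv)
    qed
    then show ?thesis using True Suc.prems fg by simp
  next
    case False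
    then show ?thesis using Suc fg by simp
  qed
qed simp

declare upt_Suc[simp del]

definition blk :: "pforest \<Rightarrow> nat \<Rightarrow> pforest" where
  "blk F j = filter (\<lambda>T. root_type T = j) F"
definition gv :: "ptree \<Rightarrow> nat \<times> (nat \<Rightarrow> nat)" where
  "gv v = (root_type v, indeg_type v)"
definition ivsT :: "ptree \<Rightarrow> (nat \<times> (nat \<Rightarrow> nat)) multiset" where
  "ivsT T = mset (map gv (subtrees T))"
definition ivs :: "pforest \<Rightarrow> (nat \<times> (nat \<Rightarrow> nat)) multiset" where
  "ivs F = mset (map gv (vertices F))"

lemma ivs_Nil[simp]: "ivs [] = {#}" by (simp add: ivs_def vertices_def)
lemma ivs_Cons: "ivs (T # F) = ivsT T + ivs F" by (simp add: ivs_def ivsT_def vertices_def)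
lemma ivs_mset: "ivs F = sum_mset (image_mset ivsT (mset F))"
  by (induction F) (simp_all add: ivs_Cons)
lemma ivs_perm: "mset F = mset G \<Longrightarrow> ivs F = ivs G" by (simp add: ivs_mset)
lemma ivs_append: "ivs (xs @ ys) = ivs xs + ivs ys" by (simp add: ivs_mset)
lemma ivsT_Node: "ivsT (Node t cs) = add_mset (t, indeg_type (Node t cs)) (ivs cs)"
  by (simp add: ivsT_def ivs_def vertices_def gv_def)
lemma ivsT_ne: "ivsT T \<noteq> {#}" by (cases T) (simp add: ivsT_Node)
lemma ivs_empty: "ivs F = {#} \<Longrightarrow> F = []"
  by (cases F) (auto simp: ivs_Cons ivsT_ne)
lemma gv_in_ivs: assumes "T \<in> set F" shows "gv T \<in># ivs F"
proof -
  have "T \<in> set (subtrees T)" by (cases T) simp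
  hence "T \<in> set (vertices F)" using assms by (auto simp: vertices_def)
  thus ?thesis by (simp add: ivs_def)
qed
lemma indeg_blk: "indeg_type v j = length (blk (children v) j)"
  by (simp add: indeg_type_def blk_def)
lemma blk_type: "x \<in> set (blk F j) \<Longrightarrow> root_type x = j" by (simp add: blk_def)
lemma wf_tree_root: "wf_tree d T \<Longrightarrow> root_type T \<in> {1..d}" by (cases T) auto

lemma blocks: "wf_forest d F \<Longrightarrow> concat (map (blk F) [1..<Suc d]) = F"
  unfolding blk_def wf_forest_def
  by (rule concat_blocks) (auto dest!: wf_tree_root)

lemma mset_blocks: "mset (concat (map g [1..<Suc d])) = (\<Sum>j\<in>{1..d}. mset (g j))"
proof -
  have "mset (concat (map g [1..<Suc d])) = sum_list (map (\<lambda>j. mset (g j)) [1..<Suc d])"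
    by (simp add: mset_concat o_def)
  also have "\<dots> = (\<Sum>j\<in>{1..d}. mset (g j))"
    by (simp only: interv_sum_list_conv_sum_set_nat set_upt atLeastLessThanSuc_atLeastAtMost)
  finally show ?thesis .
qed

definition cls :: "nat \<Rightarrow> (nat \<Rightarrow> nat) \<Rightarrow> (nat \<times> (nat \<Rightarrow> nat)) multiset \<Rightarrow> pforest set" where
  "cls d r D = {F. wf_forest d F \<and> (\<forall>j\<in>{1..d}. length (blk F j) = r j) \<and> ivs F = D}"

definition phi :: "nat \<Rightarrow> nat \<Rightarrow> pforest \<Rightarrow> (nat \<Rightarrow> nat) \<times> pforest" where
  "phi d t F = (indeg_type (hd (blk F t)),
     concat (map (\<lambda>j. blk (children (hd (blk F t))) j @ (if j = t then tl (blk F t) else blk F j)) [1..<Suc d]))"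

definition psi :: "nat \<Rightarrow> nat \<Rightarrow> (nat \<Rightarrow> nat) \<times> pforest \<Rightarrow> pforest" where
  "psi d t x = concat (map (\<lambda>j. (if j = t then [Node t (concat (map (\<lambda>j. take (fst x j) (blk (snd x) j)) [1..<Suc d]))] else [])
       @ drop (fst x j) (blk (snd x) j)) [1..<Suc d])"

definition rr :: "(nat \<Rightarrow> nat) \<Rightarrow> nat \<Rightarrow> (nat \<Rightarrow> nat) \<Rightarrow> nat \<Rightarrow> nat" where
  "rr r t u = (\<lambda>j. r j + u j - (if j = t then 1 else 0))"

lemma sum_delta_mset: "t \<in> {1..d} \<Longrightarrow> (\<Sum>j\<in>{1..(d::nat)}. (if j = t then {#x#} else {#})) = {#x#}"
  by (simp add: sum.delta' sum.delta)

lemma cm: assumes "map f xs = map g xs" "concat (map g xs) = y" shows "concat (map f xs) = y"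
  using assms by (simp only:)

lemma in_tl: "x \<in> set (tl xs) \<Longrightarrow> x \<in> set xs" by (cases xs) auto

lemma phi_props:
  assumes F: "F \<in> cls d r D" and t: "1 \<le> t" "t \<le> d" and rt: "r t \<ge> 1"
  shows "psi d t (phi d t F) = F \<and> phi d t F \<in> (SIGMA u:{u. (t,u) \<in># D}. cls d (rr r t u) (D - {#(t,u)#}))"
proof -
  have wf: "wf_forest d F" and len: "\<forall>j\<in>{1..d}. length (blk F j) = r j" and iv: "ivs F = D"
    using F by (auto simp: cls_def)
  define T where "T = hd (blk F t)"
  define cs where "cs = children T"
  define R where "R j = (if j = t then tl (blk F t) else blk F j)" for j
  define u where "u = indeg_type T"
  define F' where "F' = concat (map (\<lambda>j. blk cs j @ R j) [1..<Suc d])"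
  have ph: "phi d t F = (u, F')" by (simp add: phi_def T_def cs_def R_def u_def F'_def)
  have lt: "length (blk F t) = r t" using len t by auto
  have ne: "blk F t \<noteq> []" using lt rt by auto
  have bt: "blk F t = T # tl (blk F t)" using ne by (simp add: T_def)
  have TF: "T \<in> set F" using hd_in_set[OF ne] by (simp add: T_def blk_def)
  have rT: "root_type T = t" using hd_in_set[OF ne] by (simp add: T_def blk_def)
  have wfT: "wf_tree d T" using wf TF by (simp add: wf_forest_def)
  have Tn: "T = Node t cs" using rT by (cases T) (simp add: cs_def)
  have wfcs: "wf_forest d cs" using wfT Tn by (simp add: wf_forest_def)
  have Rsub: "set (R j) \<subseteq> set (blk F j)" for j
    by (auto simp: R_def dest: in_tl)
  have gty: "root_type y = j" if "y \<in> set (blk cs j @ R j)" for j y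
    using that Rsub[of j] by (auto simp: blk_type)
  have bF': "blk F' j = blk cs j @ R j" if "j \<in> {1..d}" for j
  proof -
    have "filter (\<lambda>x. root_type x = j) (concat (map (\<lambda>j. blk cs j @ R j) [1..<Suc d])) = (\<lambda>j. blk cs j @ R j) j"
      by (rule filter_concat_blocks) (use that gty in auto)
    thus ?thesis by (simp add: F'_def blk_def[of "concat _"])
  qed
  have uj: "u j = length (blk cs j)" for j by (simp add: u_def indeg_blk cs_def)
  have part1: "psi d t (u, F') = F"
  proof -
    have cs': "concat (map (\<lambda>j. take (u j) (blk F' j)) [1..<Suc d]) = cs"
    proof -
      have "map (\<lambda>j. take (u j) (blk F' j)) [1..<Suc d] = map (blk cs) [1..<Suc d]"
        by (rule map_cong) (auto simp: bF' uj)
      hence "concat (map (\<lambda>j. take (u j) (blk F' j)) [1..<Suc d]) = concat (map (blk cs) [1..<Suc d])"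
        by (rule arg_cong)
      thus ?thesis using blocks[OF wfcs] by (rule trans)
    qed
    have "map (\<lambda>j. (if j = t then [Node t cs] else []) @ drop (u j) (blk F' j)) [1..<Suc d] = map (blk F) [1..<Suc d]"
    proof (rule map_cong[OF refl])
      fix j assume "j \<in> set [1..<Suc d]"
      hence j: "j \<in> {1..d}" by auto
      show "(if j = t then [Node t cs] else []) @ drop (u j) (blk F' j) = blk F j"
        using bt by (auto simp: bF'[OF j] uj R_def Tn[symmetric])
    qed
    hence "concat (map (\<lambda>j. (if j = t then [Node t cs] else []) @ drop (u j) (blk F' j)) [1..<Suc d]) = F"
      using blocks[OF wf] by (rule cm)
    thus ?thesis by (simp only: psi_def fst_conv snd_conv cs')
  qed
  have uD: "(t,u) \<in># D" using gv_in_ivs[OF TF] iv rT by (simp add: gv_def u_def)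
  have wf': "wf_forest d F'"
  proof -
    have "\<forall>y\<in>set F'. wf_tree d y"
    proof
      fix y assume "y \<in> set F'"
      then obtain j where "y \<in> set (blk cs j) \<or> y \<in> set (R j)" by (auto simp: F'_def)
      hence "y \<in> set cs \<or> y \<in> set F" using Rsub[of j] by (auto simp: blk_def)
      thus "wf_tree d y" using wf wfcs by (auto simp: wf_forest_def)
    qed
    moreover have "sorted (map root_type F')" unfolding F'_def
      by (rule sorted_concat_blocks) (use gty in auto)
    ultimately show ?thesis by (simp add: wf_forest_def)
  qed
  have len': "\<forall>j\<in>{1..d}. length (blk F' j) = rr r t u j"
  proof
    fix j assume j: "j \<in> {1..d}"
    show "length (blk F' j) = rr r t u j"
      using len j lt rt by (auto simp: bF'[OF j] uj[symmetric] R_def rr_def)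
  qed
  have msF: "mset F' + {#T#} = mset cs + mset F"
  proof -
    have "mset F' = (\<Sum>j\<in>{1..d}. mset (blk cs j) + mset (R j))"
      unfolding F'_def mset_blocks by simp
    also have "\<dots> = (\<Sum>j\<in>{1..d}. mset (blk cs j)) + (\<Sum>j\<in>{1..d}. mset (R j))"
      by (simp add: sum.distrib)
    also have "(\<Sum>j\<in>{1..d}. mset (blk cs j)) = mset cs"
      using mset_blocks[of "blk cs" d] blocks[OF wfcs] by simp
    finally have 1: "mset F' = mset cs + (\<Sum>j\<in>{1..d}. mset (R j))" .
    have "mset F = (\<Sum>j\<in>{1..d}. mset (blk F j))"
      using mset_blocks[of "blk F" d] blocks[OF wf] by simp
    also have "\<dots> = (\<Sum>j\<in>{1..d}. mset (R j) + (if j = t then {#T#} else {#}))"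
    proof (rule sum.cong[OF refl])
      fix j assume "j \<in> {1..d}"
      show "mset (blk F j) = mset (R j) + (if j = t then {#T#} else {#})"
      proof (cases "j = t")
        case True
        have "mset (blk F t) = mset (T # tl (blk F t))" using bt by (rule arg_cong)
        then show ?thesis using True by (simp add: R_def)
      next
        case False then show ?thesis by (simp add: R_def)
      qed
    qed
    also have "\<dots> = (\<Sum>j\<in>{1..d}. mset (R j)) + {#T#}"
      using t by (simp add: sum.distrib sum_delta_mset)
    finally show ?thesis using 1 by simp
  qed
  have iv': "ivs F' = D - {#(t,u)#}"
  proof -
    have "ivs (F' @ [T]) = ivs (cs @ F)" by (rule ivs_perm) (use msF in simp)
    hence "ivs F' + ivsT T = ivs cs + D" by (simp add: ivs_append ivs_Cons iv)
    hence "add_mset (t,u) (ivs F') = D" by (simp add: Tn ivsT_Node u_def)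
    thus ?thesis by auto
  qed
  show ?thesis using part1 ph uD wf' len' iv' by (simp add: cls_def)
qed

lemma psi_props:
  assumes x: "x \<in> (SIGMA u:{u. (t,u) \<in># D}. cls d (rr r t u) (D - {#(t,u)#}))"
    and t: "1 \<le> t" "t \<le> d" and rt: "r t \<ge> 1"
    and valid: "\<forall>y\<in>#D. \<forall>j. j \<notin> {1..d} \<longrightarrow> snd y j = 0"
  shows "phi d t (psi d t x) = x \<and> psi d t x \<in> cls d r D"
proof -
  obtain u F' where xe: "x = (u,F')" and uD: "(t,u) \<in># D" and F': "F' \<in> cls d (rr r t u) (D - {#(t,u)#})"
    using x by auto
  have wf': "wf_forest d F'" and len': "\<forall>j\<in>{1..d}. length (blk F' j) = rr r t u j"
    and iv': "ivs F' = D - {#(t,u)#}" using F' by (auto simp: cls_def)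
  define cs where "cs = concat (map (\<lambda>j. take (u j) (blk F' j)) [1..<Suc d])"
  define h where "h j = (if j = t then [Node t cs] else []) @ drop (u j) (blk F' j)" for j
  define F where "F = concat (map h [1..<Suc d])"
  have ps: "psi d t x = F" unfolding psi_def xe fst_conv snd_conv F_def h_def[abs_def] cs_def ..
  have ule: "u j \<le> length (blk F' j)" if "j \<in> {1..d}" for j
    using len' that rt by (auto simp: rr_def)
  have uz: "u j = 0" if "j \<notin> {1..d}" for j
    using valid uD that by fastforce
  have cty: "root_type y = j" if "y \<in> set (take (u j) (blk F' j))" for y j
    using that by (auto dest: in_set_takeD simp: blk_type)
  have bcs: "blk cs j = take (u j) (blk F' j)" if "j \<in> {1..d}" for j
  proof -
    have "filter (\<lambda>x. root_type x = j) (concat (map (\<lambda>j. take (u j) (blk F' j)) [1..<Suc d]))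
        = (\<lambda>j. take (u j) (blk F' j)) j"
      by (rule filter_concat_blocks) (use that cty in auto)
    thus ?thesis by (simp add: cs_def blk_def[of "concat _"])
  qed
  have csty: "root_type y \<in> {1..d}" if "y \<in> set cs" for y
    using that cty unfolding cs_def by fastforce
  have bcs0: "blk cs j = []" if "j \<notin> {1..d}" for j
    using csty that by (auto simp: blk_def filter_empty_conv)
  have indeg: "indeg_type (Node t cs) = u"
  proof
    fix j show "indeg_type (Node t cs) j = u j"
    proof (cases "j \<in> {1..d}")
      case True then show ?thesis using ule[OF True] by (simp add: indeg_blk bcs)
    next
      case False then show ?thesis by (simp add: indeg_blk bcs0 uz)
    qed
  qed
  have hty: "root_type y = j" if "y \<in> set (h j)" for y j
    using that by (auto simp: h_def blk_type dest: in_set_dropD split: if_splits)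
  have bF: "blk F j = h j" if "j \<in> {1..d}" for j
  proof -
    have "filter (\<lambda>x. root_type x = j) (concat (map h [1..<Suc d])) = h j"
      by (rule filter_concat_blocks) (use that hty in auto)
    thus ?thesis by (simp add: F_def blk_def[of "concat _"])
  qed
  have tin: "t \<in> {1..d}" using t by auto
  have hdF: "hd (blk F t) = Node t cs" and tlF: "tl (blk F t) = drop (u t) (blk F' t)"
    using bF[OF tin] by (simp_all add: h_def)
  have part1: "phi d t F = (u, F')"
  proof -
    have "map (\<lambda>j. blk cs j @ (if j = t then tl (blk F t) else blk F j)) [1..<Suc d] = map (blk F') [1..<Suc d]"
    proof (rule map_cong[OF refl])
      fix j assume "j \<in> set [1..<Suc d]"
      hence j: "j \<in> {1..d}" by auto
      show "blk cs j @ (if j = t then tl (blk F t) else blk F j) = blk F' j"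
        using j by (simp add: bcs tlF bF h_def)
    qed
    hence "concat (map (\<lambda>j. blk cs j @ (if j = t then tl (blk F t) else blk F j)) [1..<Suc d]) = F'"
      using blocks[OF wf'] by (rule cm)
    thus ?thesis by (simp add: phi_def hdF indeg)
  qed
  have wfN: "wf_tree d (Node t cs)"
  proof -
    have "sorted (map root_type cs)" unfolding cs_def
      by (rule sorted_concat_blocks) (use cty in auto)
    moreover have "\<forall>c\<in>set cs. wf_tree d c"
      using wf' by (auto simp: cs_def wf_forest_def blk_def dest!: in_set_takeD)
    ultimately show ?thesis using t by simp
  qed
  have wf: "wf_forest d F"
  proof -
    have "\<forall>y\<in>set F. wf_tree d y"
    proof
      fix y assume "y \<in> set F"
      then obtain j where "y \<in> set (h j)" by (auto simp: F_def)
      hence "y = Node t cs \<or> y \<in> set F'"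
        by (auto simp: h_def blk_def split: if_splits dest!: in_set_dropD)
      thus "wf_tree d y" using wf' wfN by (auto simp: wf_forest_def)
    qed
    moreover have "sorted (map root_type F)" unfolding F_def
      by (rule sorted_concat_blocks) (use hty in auto)
    ultimately show ?thesis by (simp add: wf_forest_def)
  qed
  have len: "\<forall>j\<in>{1..d}. length (blk F j) = r j"
  proof
    fix j assume j: "j \<in> {1..d}"
    show "length (blk F j) = r j"
      using len' j rt by (auto simp: bF[OF j] h_def rr_def)
  qed
  have msF: "mset F + mset cs = mset F' + {#Node t cs#}"
  proof -
    have "mset F = (\<Sum>j\<in>{1..d}. (if j = t then {#Node t cs#} else {#}) + mset (drop (u j) (blk F' j)))"
      unfolding F_def mset_blocks by (rule sum.cong) (auto simp: h_def)
    also have "\<dots> = {#Node t cs#} + (\<Sum>j\<in>{1..d}. mset (drop (u j) (blk F' j)))"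
      using tin by (simp add: sum.distrib sum_delta_mset)
    finally have 1: "mset F = {#Node t cs#} + (\<Sum>j\<in>{1..d}. mset (drop (u j) (blk F' j)))" .
    have 2: "mset cs = (\<Sum>j\<in>{1..d}. mset (take (u j) (blk F' j)))"
      unfolding cs_def mset_blocks ..
    have "mset F' = (\<Sum>j\<in>{1..d}. mset (blk F' j))"
      using mset_blocks[of "blk F'" d] blocks[OF wf'] by simp
    also have "\<dots> = (\<Sum>j\<in>{1..d}. mset (take (u j) (blk F' j)) + mset (drop (u j) (blk F' j)))"
      by (rule sum.cong[OF refl]) (metis append_take_drop_id mset_append)
    also have "\<dots> = (\<Sum>j\<in>{1..d}. mset (take (u j) (blk F' j))) + (\<Sum>j\<in>{1..d}. mset (drop (u j) (blk F' j)))"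
      by (simp add: sum.distrib)
    finally show ?thesis using 1 2 by simp
  qed
  have iv: "ivs F = D"
  proof -
    have "ivs (F @ cs) = ivs (F' @ [Node t cs])" by (rule ivs_perm) (use msF in simp)
    hence "ivs F + ivs cs = (D - {#(t,u)#}) + add_mset (t,u) (ivs cs)"
      by (simp add: ivs_append ivs_Cons iv' ivsT_Node indeg)
    hence "ivs F = add_mset (t,u) (D - {#(t,u)#})" by simp
    thus ?thesis using uD by simp
  qed
  show ?thesis using part1 ps xe wf len iv by (simp add: cls_def)
qed

lemma cls_bij:
  assumes t: "1 \<le> t" "t \<le> d" and rt: "r t \<ge> 1"
    and valid: "\<forall>y\<in>#D. \<forall>j. j \<notin> {1..d} \<longrightarrow> snd y j = 0"
  shows "bij_betw (phi d t) (cls d r D) (SIGMA u:{u. (t,u) \<in># D}. cls d (rr r t u) (D - {#(t,u)#}))"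
proof (rule bij_betw_byWitness[where f'="psi d t"])
  show "\<forall>a\<in>cls d r D. psi d t (phi d t a) = a"
    using phi_props[where t=t and d=d and r=r and D=D] t rt by blast
  show "phi d t ` cls d r D \<subseteq> (SIGMA u:{u. (t,u) \<in># D}. cls d (rr r t u) (D - {#(t,u)#}))"
    using phi_props[where t=t and d=d and r=r and D=D] t rt by blast
  show "\<forall>a'\<in>(SIGMA u:{u. (t,u) \<in># D}. cls d (rr r t u) (D - {#(t,u)#})). phi d t (psi d t a') = a'"
    using psi_props[where t=t and d=d and r=r and D=D] t rt valid by blast
  show "psi d t ` (SIGMA u:{u. (t,u) \<in># D}. cls d (rr r t u) (D - {#(t,u)#})) \<subseteq> cls d r D"
    using psi_props[where t=t and d=d and r=r and D=D] t rt valid by blast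
qed

definition nD :: "(nat \<times> (nat \<Rightarrow> nat)) multiset \<Rightarrow> nat \<Rightarrow> nat" where
  "nD D j = size (filter_mset (\<lambda>x. fst x = j) D)"
definition ED :: "(nat \<times> (nat \<Rightarrow> nat)) multiset \<Rightarrow> nat \<Rightarrow> nat \<Rightarrow> nat" where
  "ED D i j = sum_mset (image_mset (\<lambda>x. snd x j) (filter_mset (\<lambda>x. fst x = i) D))"
definition Pf :: "(nat \<times> (nat \<Rightarrow> nat)) multiset \<Rightarrow> nat" where
  "Pf D = (\<Prod>x\<in>set_mset D. fact (count D x))"

lemma nD_add: "nD (add_mset x M) j = nD M j + (if fst x = j then 1 else 0)"
  by (simp add: nD_def)
lemma ED_add: "ED (add_mset x M) i j = ED M i j + (if fst x = i then snd x j else 0)"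
  by (simp add: ED_def)
lemma nD_empty[simp]: "nD {#} j = 0" by (simp add: nD_def)
lemma ED_empty[simp]: "ED {#} i j = 0" by (simp add: ED_def)

lemma Pf_rem:
  assumes x: "x \<in># D"
  shows "Pf D = count D x * Pf (D - {#x#})"
proof -
  define D' where "D' = D - {#x#}"
  have sub: "set_mset D' \<subseteq> set_mset D" by (simp add: D'_def in_diffD subsetI)
  have cx: "count D x = Suc (count D' x)" using x by (simp add: D'_def)
  have cy: "count D' y = count D y" if "y \<noteq> x" for y using that by (simp add: D'_def)
  have "Pf D' = (\<Prod>y\<in>set_mset D. fact (count D' y))"
    unfolding Pf_def by (rule prod.mono_neutral_left) (use sub in \<open>auto simp: not_in_iff\<close>)
  also have "\<dots> = fact (count D' x) * (\<Prod>y\<in>set_mset D - {x}. fact (count D' y))"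
    using x by (simp add: prod.remove)
  also have "(\<Prod>y\<in>set_mset D - {x}. fact (count D' y)) = (\<Prod>y\<in>set_mset D - {x}. fact (count D y))"
    by (rule prod.cong) (auto simp: cy)
  finally have 1: "Pf D' = fact (count D' x) * (\<Prod>y\<in>set_mset D - {x}. fact (count D y))" .
  have "Pf D = fact (count D x) * (\<Prod>y\<in>set_mset D - {x}. fact (count D y))"
    unfolding Pf_def using x by (simp add: prod.remove)
  also have "\<dots> = count D x * Pf D'" using 1 cx by (simp add: algebra_simps)
  finally show ?thesis by (simp add: D'_def)
qed

lemma sum_mset_count:
  fixes g :: "'a \<Rightarrow> nat"
  shows "sum_mset (image_mset g M) = (\<Sum>x\<in>set_mset M. count M x * g x)"
proof -
  obtain xs where M: "M = mset xs" using ex_mset[of M] by metis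
  have "sum_mset (image_mset g M) = sum_list (map g xs)"
    unfolding M mset_map[symmetric] sum_mset_sum_list ..
  also have "\<dots> = (\<Sum>x\<in>set xs. count_list xs x * g x)" by (rule sum_list_map_eq_sum_count)
  also have "\<dots> = (\<Sum>x\<in>set_mset M. count M x * g x)" by (simp add: M count_mset)
  finally show ?thesis .
qed

lemma sum_U:
  fixes f :: "(nat \<Rightarrow> nat) \<Rightarrow> nat"
  shows "(\<Sum>u\<in>{u. (t,u) \<in># D}. count D (t,u) * f u)
       = sum_mset (image_mset (\<lambda>x. f (snd x)) (filter_mset (\<lambda>x. fst x = t) D))"
proof -
  have set: "set_mset (filter_mset (\<lambda>x. fst x = t) D) = (\<lambda>u. (t,u)) ` {u. (t,u) \<in># D}"
    by auto
  have "sum_mset (image_mset (\<lambda>x. f (snd x)) (filter_mset (\<lambda>x. fst x = t) D))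
     = (\<Sum>x\<in>(\<lambda>u. (t,u)) ` {u. (t,u) \<in># D}. count (filter_mset (\<lambda>x. fst x = t) D) x * f (snd x))"
    by (simp only: sum_mset_count set)
  also have "\<dots> = (\<Sum>u\<in>{u. (t,u) \<in># D}. count D (t,u) * f u)"
    by (subst sum.reindex) (auto simp: inj_on_def)
  finally show ?thesis ..
qed

lemma sum_U_count: "(\<Sum>u\<in>{u. (t,u) \<in># D}. count D (t,u)) = nD D t"
proof -
  have "(\<Sum>u\<in>{u. (t,u) \<in># D}. count D (t,u)) = (\<Sum>u\<in>{u. (t,u) \<in># D}. count D (t,u) * 1)" by simp
  also have "\<dots> = sum_mset (image_mset (\<lambda>x. 1) (filter_mset (\<lambda>x. fst x = t) D))" by (rule sum_U)
  also have "\<dots> = nD D t" by (simp only: nD_def size_eq_sum_mset)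
  finally show ?thesis .
qed

lemma sum_U_E: "(\<Sum>u\<in>{u. (t,u) \<in># D}. count D (t,u) * u j) = ED D t j"
  unfolding ED_def by (rule sum_U)

lemma finite_U: "finite {u. (t,u) \<in># D}"
proof -
  have "{u. (t,u) \<in># D} \<subseteq> snd ` set_mset D"
  proof
    fix u assume "u \<in> {u. (t,u) \<in># D}"
    thus "u \<in> snd ` set_mset D" by (intro image_eqI[of _ snd "(t,u)"]) auto
  qed
  thus ?thesis by (rule finite_subset) simp
qed


lemma nD_zero_outside:
  assumes "\<forall>y\<in>#D. fst y \<in> {1..d}" and "i \<notin> {1..d}"
  shows "nD D i = 0"
proof -
  have "filter_mset (\<lambda>x. fst x = i) D = {#}" using assms by (auto simp: filter_mset_eq_mempty_iff)
  thus ?thesis by (simp add: nD_def)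
qed

lemma ED_zero: "nD D i = 0 \<Longrightarrow> ED D i j = 0"
  by (auto simp: nD_def ED_def)

lemma Mt_dims[simp]: "dim_row (Mt d nn E) = d" "dim_col (Mt d nn E) = d"
  by (simp_all add: Mt_def)

lemma main_count:
  assumes "\<forall>y\<in>#D. fst y \<in> {1..d} \<and> (\<forall>j. j \<notin> {1..d} \<longrightarrow> snd y j = 0)"
    and "\<forall>j\<in>{1..d}. nD D j = r j + (\<Sum>i=1..d. ED D i j)"
  shows "finite (cls d r D) \<and> int (card (cls d r D) * Pf D) =
     (\<Prod>j=1..d. fact (nD D j - 1)) * det (Mt d (nD D) (ED D))"
  using assms
proof (induction "size D" arbitrary: D r rule: less_induct)
  case less
  have valid: "\<forall>y\<in>#D. fst y \<in> {1..d} \<and> (\<forall>j. j \<notin> {1..d} \<longrightarrow> snd y j = 0)" by fact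
  have bal: "\<forall>j\<in>{1..d}. nD D j = r j + (\<Sum>i=1..d. ED D i j)" by fact
  show ?case
  proof (cases "D = {#}")
    case True
    have r0: "r j = 0" if "j \<in> {1..d}" for j using bal that True by auto
    have cl: "cls d r D = {[]}"
    proof
      show "cls d r D \<subseteq> {[]}" using True by (auto simp: cls_def dest: ivs_empty)
      show "{[]} \<subseteq> cls d r D" using True r0 by (auto simp: cls_def wf_forest_def blk_def)
    qed
    have M1: "Mt d (nD D) (ED D) = 1\<^sub>m d" by (rule eq_matI) (auto simp: Mt_index True)
    show ?thesis unfolding cl M1 by (simp add: True Pf_def)
  next
    case Dne: False
    show ?thesis
    proof (cases "\<exists>t\<in>{1..d}. r t \<ge> 1")
      case False
      hence r0: "r j = 0" if "j \<in> {1..d}" for j using that by force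
      have cl: "cls d r D = {}"
      proof (rule ccontr)
        assume "cls d r D \<noteq> {}"
        then obtain F where F: "F \<in> cls d r D" by blast
        hence "F \<noteq> []" using Dne by (auto simp: cls_def)
        then obtain T where T: "T \<in> set F" by (cases F) auto
        have wf: "wf_tree d T" using F T by (auto simp: cls_def wf_forest_def)
        hence j: "root_type T \<in> {1..d}" by (rule wf_tree_root)
        have "T \<in> set (blk F (root_type T))" using T by (simp add: blk_def)
        hence "length (blk F (root_type T)) > 0" by (auto simp: length_pos_if_in_set)
        moreover have "length (blk F (root_type T)) = r (root_type T)" using F j by (simp add: cls_def)
        ultimately show False using r0[OF j] by simp
      qed
      obtain y where y: "y \<in># D" using Dne by (meson multiset_nonemptyE)
      have "det (Mt d (nD D) (ED D)) = 0"
      proof (rule Mt_det_zero[where t="fst y"])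
        show "\<And>j. 1 \<le> j \<Longrightarrow> j \<le> d \<Longrightarrow> nD D j = (\<Sum>i=1..d. ED D i j)" using bal r0 by auto
        show "\<And>i j. nD D i = 0 \<Longrightarrow> ED D i j = 0" by (rule ED_zero)
        show "1 \<le> fst y" "fst y \<le> d" using valid y by auto
        have "y \<in># filter_mset (\<lambda>x. fst x = fst y) D" using y by simp
        thus "0 < nD D (fst y)" unfolding nD_def by (metis nonempty_has_size size_eq_0_iff_empty empty_iff set_mset_empty)
      qed
      thus ?thesis by (simp add: cl)
    next
      case True
      then obtain t where t1: "1 \<le> t" and td: "t \<le> d" and rt: "r t \<ge> 1" by auto
      have tin: "t \<in> {1..d}" using t1 td by auto
      define U where "U = {u. (t,u) \<in># D}"
      define Du where "Du u = D - {#(t,u)#}" for u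
      have fU: "finite U" by (simp add: U_def finite_U)
      have DU: "D = add_mset (t,u) (Du u)" if "u \<in> U" for u using that by (simp add: U_def Du_def)
      have nDu: "nD (Du u) = (nD D)(t := nD D t - 1)" if "u \<in> U" for u
      proof
        fix j show "nD (Du u) j = ((nD D)(t := nD D t - 1)) j"
          using nD_add[of "(t,u)" "Du u" j] nD_add[of "(t,u)" "Du u" t] DU[OF that] by auto
      qed
      have EDa: "ED D i j = ED (Du u) i j + (if t = i then u j else 0)" if "u \<in> U" for u i j
        using ED_add[of "(t,u)" "Du u" i j] DU[OF that] by simp
      have EDu: "ED (Du u) = (ED D)(t := \<lambda>j. ED D t j - u j)" if "u \<in> U" for u
      proof (rule ext, rule ext)
        fix i j show "ED (Du u) i j = ((ED D)(t := \<lambda>j. ED D t j - u j)) i j"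
          using EDa[OF that, of i j] by auto
      qed
      have le: "u j \<le> ED D t j" if "u \<in> U" for u j using EDa[OF that, of t j] by simp
      have validD: "\<forall>y\<in>#D. \<forall>j. j \<notin> {1..d} \<longrightarrow> snd y j = 0" using valid by auto
      have IH: "finite (cls d (rr r t u) (Du u)) \<and> int (card (cls d (rr r t u) (Du u)) * Pf (Du u)) =
         (\<Prod>j=1..d. fact (nD (Du u) j - 1)) * det (Mt d (nD (Du u)) (ED (Du u)))" if u: "u \<in> U" for u
      proof (rule less.hyps)
        show "size (Du u) < size D" using DU[OF u] by (metis size_add_mset lessI)
        show "\<forall>y\<in>#Du u. fst y \<in> {1..d} \<and> (\<forall>j. j \<notin> {1..d} \<longrightarrow> snd y j = 0)"
          using valid by (auto simp: Du_def dest: in_diffD)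
        show "\<forall>j\<in>{1..d}. nD (Du u) j = rr r t u j + (\<Sum>i=1..d. ED (Du u) i j)"
        proof
          fix j assume j: "j \<in> {1..d}"
          have "(\<Sum>i=1..d. ED D i j) = (\<Sum>i=1..d. ED (Du u) i j + (if t = i then u j else 0))"
            by (rule sum.cong) (auto simp: EDa[OF u])
          also have "\<dots> = (\<Sum>i=1..d. ED (Du u) i j) + u j"
            using tin by (simp add: sum.distrib)
          finally have s: "(\<Sum>i=1..d. ED D i j) = (\<Sum>i=1..d. ED (Du u) i j) + u j" .
          have "nD D j = nD (Du u) j + (if t = j then 1 else 0)"
            using nD_add[of "(t,u)" "Du u" j] DU[OF u] by simp
          then show "nD (Du u) j = rr r t u j + (\<Sum>i=1..d. ED (Du u) i j)"
            using bal j s rt by (auto simp: rr_def split: if_splits)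
        qed
      qed
      have Sig: "(SIGMA u:{u. (t,u) \<in># D}. cls d (rr r t u) (D - {#(t,u)#})) = (SIGMA u:U. cls d (rr r t u) (Du u))"
        by (simp add: U_def Du_def)
      have bij: "bij_betw (phi d t) (cls d r D) (SIGMA u:U. cls d (rr r t u) (Du u))"
        using cls_bij[where t=t and d=d and r=r and D=D, OF t1 td rt validD] Sig by simp
      have finS: "finite (SIGMA u:U. cls d (rr r t u) (Du u))"
        using fU IH by (intro finite_SigmaI) auto
      have fin: "finite (cls d r D)" using bij_betw_finite[OF bij] finS by simp
      have card: "card (cls d r D) = (\<Sum>u\<in>U. card (cls d (rr r t u) (Du u)))"
        using bij_betw_same_card[OF bij] card_SigmaI[of U "\<lambda>u. cls d (rr r t u) (Du u)"] fU IH by simp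
      have PfU: "Pf D = count D (t,u) * Pf (Du u)" if "u \<in> U" for u
        using Pf_rem[of "(t,u)" D] that by (simp add: U_def Du_def)
      define nn where "nn = nD D"
      define E where "E = ED D"
      define nn' where "nn' = nn(t := nn t - 1)"
      define P' where "P' = (\<Prod>j=1..d. (fact (nn' j - 1) :: int))"
      have "int (card (cls d r D) * Pf D) = (\<Sum>u\<in>U. int (card (cls d (rr r t u) (Du u))) * int (Pf D))"
        by (simp add: card sum_distrib_right)
      also have "\<dots> = (\<Sum>u\<in>U. int (count D (t,u)) * int (card (cls d (rr r t u) (Du u)) * Pf (Du u)))"
        by (rule sum.cong) (auto simp: PfU)
      also have "\<dots> = (\<Sum>u\<in>U. int (count D (t,u)) * (P' * det (Mt d nn' (E(t := \<lambda>j. E t j - u j)))))"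
        by (rule sum.cong) (use IH nDu EDu in \<open>auto simp: P'_def nn'_def nn_def E_def\<close>)
      finally have calc: "int (card (cls d r D) * Pf D) =
          P' * (\<Sum>u\<in>U. int (count D (t,u)) * det (Mt d nn' (E(t := \<lambda>j. E t j - u j))))"
        by (simp add: sum_distrib_left algebra_simps)
      have sc: "(\<Sum>u\<in>U. count D (t,u)) = nn t" by (simp add: U_def nn_def sum_U_count)
      have sE: "(\<Sum>u\<in>U. count D (t,u) * u j) = E t j" for j by (simp add: U_def E_def sum_U_E)
      have nt: "nn t \<ge> 1" using bal tin rt by (auto simp: nn_def)
      show ?thesis
      proof (cases "nn t \<ge> 2")
        case True
        have "(\<Prod>j=1..d. (fact (nn j - 1) :: int)) = fact (nn t - 1) * (\<Prod>j\<in>{1..d}-{t}. fact (nn j - 1))"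
          using tin by (simp add: prod.remove)
        also have "(\<Prod>j\<in>{1..d}-{t}. (fact (nn j - 1) :: int)) = (\<Prod>j\<in>{1..d}-{t}. fact (nn' j - 1))"
          by (rule prod.cong) (auto simp: nn'_def)
        also have "(fact (nn t - 1) :: int) = int (nn t - 1) * fact (nn' t - 1)"
        proof -
          define m where "m = nn t - 2"
          have m: "nn t = Suc (Suc m)" using True by (simp add: m_def)
          show ?thesis by (simp add: nn'_def m)
        qed
        finally have Pr: "(\<Prod>j=1..d. (fact (nn j - 1) :: int)) = int (nn t - 1) * P'"
          using tin by (simp add: P'_def prod.remove mult.assoc)
        have "(\<Sum>u\<in>U. int (count D (t,u)) * det (Mt d nn' (E(t := \<lambda>j. E t j - u j))))
            = int (nn t - 1) * det (Mt d nn E)"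
          unfolding nn'_def
          by (rule Mt_rec_big[where t=t and d=d and U=U and E=E and nn=nn and c="\<lambda>u. count D (t,u)", OF t1 td fU _ sc sE True]) (use le in \<open>auto simp: E_def\<close>)
        then show ?thesis using calc fin Pr by (simp add: nn_def E_def algebra_simps)
      next
        case False
        hence n1: "nn t = 1" using nt by simp
        obtain u0 where u0: "u0 \<in> U" using sc n1 by (metis sum.empty zero_neq_one ex_in_conv)
        have c0: "count D (t,u0) \<ge> 1" using u0 by (simp add: U_def)
        have "count D (t,u0) + (\<Sum>u\<in>U-{u0}. count D (t,u)) = 1"
          using sc n1 u0 fU by (simp add: sum.remove)
        hence c1: "count D (t,u0) = 1" and r0: "(\<Sum>u\<in>U-{u0}. count D (t,u)) = 0" using c0 by linarith+
        have z: "\<forall>u\<in>U-{u0}. count D (t,u) = 0" using r0 fU by simp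
        have U1: "U = {u0}"
        proof
          show "{u0} \<subseteq> U" using u0 by simp
          show "U \<subseteq> {u0}"
          proof
            fix u assume u: "u \<in> U"
            show "u \<in> {u0}"
            proof (rule ccontr)
              assume "u \<notin> {u0}"
              hence "count D (t,u) = 0" using z u by simp
              moreover have "count D (t,u) > 0" using u by (simp add: U_def)
              ultimately show False by simp
            qed
          qed
        qed
        have col: "E i t = 0" for i
        proof (cases "i \<in> {1..d}")
          case True
          have "r t + (\<Sum>i=1..d. E i t) = 1" using bal tin n1 by (simp add: nn_def E_def)
          hence "(\<Sum>i=1..d. E i t) = 0" using rt by linarith
          thus ?thesis using True by simp
        next
          case False
          thus ?thesis using nD_zero_outside[of D d i] valid ED_zero by (auto simp: E_def)
        qed
        have "det (Mt d nn' (E(t := \<lambda>j. E t j - u0 j))) = det (Mt d nn E)"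
          unfolding nn'_def using Mt_rec_one[where t=t and d=d and nn=nn and E=E and u=u0, OF t1 td n1 col] le[OF u0] n1 by (simp add: E_def)
        moreover have "P' = (\<Prod>j=1..d. fact (nn j - 1))"
          unfolding P'_def by (rule prod.cong) (auto simp: nn'_def n1)
        ultimately show ?thesis using calc fin U1 c1 by (simp add: nn_def E_def)
      qed
    qed
  qed
qed


lemma nD_ivs: "nD (ivs F) i = num_vertices_of_type F i"
  unfolding nD_def ivs_def num_vertices_of_type_def mset_filter[symmetric] size_mset filter_map length_map
  by (simp add: o_def gv_def)

lemma ED_ivs: "ED (ivs F) i j = num_edges F i j"
proof -
  have "ED (ivs F) i j = sum_mset (mset (map (\<lambda>x. snd x j) (filter (\<lambda>x. fst x = i) (map gv (vertices F)))))"
    by (simp add: ED_def ivs_def)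
  also have "\<dots> = sum_list (map (\<lambda>x. snd x j) (filter (\<lambda>x. fst x = i) (map gv (vertices F))))"
    by (rule sum_mset_sum_list)
  also have "\<dots> = num_edges F i j"
    by (simp add: num_edges_def filter_map o_def gv_def indeg_type_def)
  finally show ?thesis .
qed

lemma count_ivs: "count (ivs F) (i,u) = num_vertices_indeg F i u"
proof -
  have "count (ivs F) (i,u) = length (filter ((=) (i,u)) (map gv (vertices F)))"
    unfolding ivs_def count_mset count_list_eq_length_filter ..
  also have "\<dots> = num_vertices_indeg F i u"
    unfolding num_vertices_indeg_def filter_map length_map o_def gv_def
    by (rule arg_cong[where f=length], rule filter_cong) auto
  finally show ?thesis .
qed

lemma mset_children_concat: "mset cs \<subseteq># mset (concat (map subtrees cs))"
proof (induction cs)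
  case (Cons c cs)
  obtain t ds where c: "c = Node t ds" by (cases c)
  show ?case by (simp add: c) (rule subset_mset.order_trans[OF Cons.IH mset_subset_eq_add_right])
qed simp

lemma mset_subtrees_concat: "c \<in> set cs \<Longrightarrow> mset (subtrees c) \<subseteq># mset (concat (map subtrees cs))"
proof (induction cs)
  case (Cons c' cs)
  then show ?case
    by (cases "c = c'") (auto intro: subset_mset.order_trans[OF _ mset_subset_eq_add_right] 
        subset_mset.order_trans[OF _ mset_subset_eq_add_left])
qed simp

lemma children_sub: "v \<in> set (subtrees T) \<Longrightarrow> mset (children v) \<subseteq># mset (subtrees T)"
proof (induction T arbitrary: v)
  case (Node t cs)
  show ?case
  proof (cases "v = Node t cs")
    case True
    then show ?thesis using mset_children_concat[of cs]
      by simp (metis add_mset_add_single mset_subset_eq_add_left subset_mset.order_trans)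
  next
    case False
    then obtain c where c: "c \<in> set cs" and v: "v \<in> set (subtrees c)" using Node.prems by auto
    have "mset (children v) \<subseteq># mset (subtrees c)" by (rule Node.IH[OF c v])
    also have "\<dots> \<subseteq># mset (concat (map subtrees cs))" by (rule mset_subtrees_concat[OF c])
    also have "\<dots> \<subseteq># mset (subtrees (Node t cs))" by simp
    finally show ?thesis .
  qed
qed

lemma wf_subtrees: "wf_tree d T \<Longrightarrow> v \<in> set (subtrees T) \<Longrightarrow> wf_tree d v"
proof (induction T arbitrary: v)
  case (Node t cs)
  show ?case
  proof (cases "v = Node t cs")
    case True then show ?thesis using Node.prems by simp
  next
    case False
    then obtain c where c: "c \<in> set cs" and v: "v \<in> set (subtrees c)" using Node.prems by auto
    show ?thesis by (rule Node.IH[OF c]) (use Node.prems c v in auto)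
  qed
qed

lemma vertex_props:
  assumes wf: "wf_forest d F" and v: "v \<in> set (vertices F)"
  shows "root_type v \<in> {1..d}" "\<And>j. j \<notin> {1..d} \<Longrightarrow> indeg_type v j = 0"
    "\<And>j. indeg_type v j \<le> num_vertices_of_type F j"
proof -
  obtain T where T: "T \<in> set F" and vT: "v \<in> set (subtrees T)" using v by (auto simp: vertices_def)
  have wfv: "wf_tree d v" using wf T vT by (auto simp: wf_forest_def intro: wf_subtrees)
  show "root_type v \<in> {1..d}" by (rule wf_tree_root[OF wfv])
  show "indeg_type v j = 0" if "j \<notin> {1..d}" for j
  proof -
    obtain t cs where vc: "v = Node t cs" by (cases v)
    have "\<forall>c\<in>set cs. root_type c \<in> {1..d}"
    proof
      fix c assume "c \<in> set cs"
      hence "wf_tree d c" using wfv vc by simp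
      thus "root_type c \<in> {1..d}" by (rule wf_tree_root)
    qed
    thus ?thesis using that by (auto simp: indeg_type_def vc filter_empty_conv)
  qed
  show "indeg_type v j \<le> num_vertices_of_type F j" for j
  proof -
    have "mset (children v) \<subseteq># mset (subtrees T)" by (rule children_sub[OF vT])
    also have "\<dots> \<subseteq># mset (vertices F)"
      unfolding vertices_def by (rule mset_subtrees_concat[OF T])
    finally have "filter_mset (\<lambda>c. root_type c = j) (mset (children v)) \<subseteq># filter_mset (\<lambda>c. root_type c = j) (mset (vertices F))"
      by (rule multiset_filter_mono)
    hence "size (filter_mset (\<lambda>c. root_type c = j) (mset (children v))) \<le> size (filter_mset (\<lambda>c. root_type c = j) (mset (vertices F)))"
      by (rule size_mset_mono)
    thus ?thesis by (simp add: indeg_type_def num_vertices_of_type_def mset_filter[symmetric] del: mset_filter)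
  qed
qed

lemma finite_box: "finite (indeg_box d n)"
proof -
  have "indeg_box d n \<subseteq> {f. \<forall>x. (x \<in> {1..d} \<longrightarrow> f x \<in> {0..(\<Sum>j=1..d. n j)}) \<and> (x \<notin> {1..d} \<longrightarrow> f x = 0)}"
  proof
    fix u assume u: "u \<in> indeg_box d n"
    have "u x \<le> (\<Sum>j=1..d. n j)" if "x \<in> {1..d}" for x
      using u that member_le_sum[of x "{1..d}" n] by (auto simp: indeg_box_def intro: le_trans)
    thus "u \<in> {f. \<forall>x. (x \<in> {1..d} \<longrightarrow> f x \<in> {0..(\<Sum>j=1..d. n j)}) \<and> (x \<notin> {1..d} \<longrightarrow> f x = 0)}"
      using u by (auto simp: indeg_box_def)
  qed
  moreover have "finite {f. \<forall>x. (x \<in> {1..d} \<longrightarrow> f x \<in> {0..(\<Sum>j=1..d. n j)}) \<and> (x \<notin> {1..d} \<longrightarrow> (f x :: nat) = 0)}"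
    by (rule finite_set_of_finite_funs) auto
  ultimately show ?thesis by (rule finite_subset)
qed

lemma filter_sum_S:
  fixes g :: "'a \<Rightarrow> nat"
  assumes S: "finite S" "set_mset D \<subseteq> S"
  shows "sum_mset (image_mset g (filter_mset P D)) = (\<Sum>x\<in>S. if P x then count D x * g x else 0)"
proof -
  have "sum_mset (image_mset g (filter_mset P D)) = (\<Sum>x\<in>set_mset (filter_mset P D). count (filter_mset P D) x * g x)"
    by (rule sum_mset_count)
  also have "\<dots> = (\<Sum>x\<in>S. count (filter_mset P D) x * g x)"
    by (rule sum.mono_neutral_left) (use S in \<open>auto simp: not_in_iff\<close>)
  also have "\<dots> = (\<Sum>x\<in>S. if P x then count D x * g x else 0)"
    by (rule sum.cong) auto
  finally show ?thesis .
qed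


definition DN :: "nat \<Rightarrow> (nat \<Rightarrow> nat) \<Rightarrow> (nat \<Rightarrow> (nat \<Rightarrow> nat) \<Rightarrow> nat) \<Rightarrow> (nat \<times> (nat \<Rightarrow> nat)) multiset" where
  "DN d n N = (\<Sum>x\<in>{1..d} \<times> indeg_box d n. replicate_mset (N (fst x) (snd x)) x)"

lemma count_DN: "count (DN d n N) x = (if x \<in> {1..d} \<times> indeg_box d n then N (fst x) (snd x) else 0)"
  unfolding DN_def count_sum using finite_box[of d n]
  by (simp add: sum.delta sum.delta')

lemma sum_S:
  assumes "finite B" "i \<in> {1..(d::nat)}"
  shows "(\<Sum>x\<in>{1..d} \<times> B. if fst x = i then f (snd x) else 0) = (\<Sum>u\<in>B. (f u :: nat))"
proof -
  have "(\<Sum>x\<in>{1..d} \<times> B. if fst x = i then f (snd x) else 0) = (\<Sum>a\<in>{1..d}. \<Sum>u\<in>B. if a = i then f u else 0)"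
    by (simp add: sum.cartesian_product case_prod_beta)
  also have "\<dots> = (\<Sum>a\<in>{1..d}. if a = i then (\<Sum>u\<in>B. f u) else 0)"
    by (rule sum.cong) auto
  also have "\<dots> = (\<Sum>u\<in>B. f u)" using assms by simp
  finally show ?thesis .
qed

theorem proposition5p7:
  fixes d :: nat and r n :: "nat \<Rightarrow> nat" and k :: "nat \<Rightarrow> nat \<Rightarrow> int"
    and N :: "nat \<Rightarrow> (nat \<Rightarrow> nat) \<Rightarrow> nat"
  assumes "d \<ge> 2"
    and "(\<Sum>i=1..d. r i) \<ge> 1"
    and "\<forall>i\<in>{1..d}. \<forall>j\<in>{1..d}. i \<noteq> j \<longrightarrow> k i j \<ge> 0"
    and "\<forall>j\<in>{1..d}. - k j j = int (r j) + (\<Sum>i\<in>{1..d} - {j}. k i j)"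
    and "\<forall>i\<in>{1..d}. int (n i) \<ge> - k i i"
    and "\<forall>i\<in>{1..d}. - k i i > 0"
    and "\<forall>i\<in>{1..d}. n i = (\<Sum>u\<in>indeg_box d n. N i u)"
    and "\<forall>i\<in>{1..d}. \<forall>j\<in>{1..d}. kprime n k i j = (\<Sum>u\<in>indeg_box d n. int (u j * N i u))"
  shows "real (card (forest_class d n r k N)) =
    (\<Prod>j=1..d. fact (n j - 1)) * real_of_int (det (mat d d (\<lambda>(i, j). - k (i + 1) (j + 1))))
    / (\<Prod>i=1..d. \<Prod>u\<in>indeg_box d n. fact (N i u))"
proof -
  note h4 = assms(4) and h5 = assms(5) and h6 = assms(6) and h7 = assms(7) and h8 = assms(8)
  define B where "B = indeg_box d n"
  define D where "D = DN d n N"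
  have fB: "finite B" by (simp add: B_def finite_box)
  have cD: "count D x = (if x \<in> {1..d} \<times> B then N (fst x) (snd x) else 0)" for x
    by (simp add: D_def B_def count_DN)
  have setD: "set_mset D \<subseteq> {1..d} \<times> B"
  proof
    fix x assume "x \<in># D"
    hence "count D x > 0" by simp
    thus "x \<in> {1..d} \<times> B" using cD[of x] by (auto split: if_splits)
  qed
  have fS: "finite ({1..d} \<times> B)" using fB by simp
  have valid: "\<forall>y\<in>#D. fst y \<in> {1..d} \<and> (\<forall>j. j \<notin> {1..d} \<longrightarrow> snd y j = 0)"
    using setD by (auto simp: B_def indeg_box_def)
  have nDD: "nD D i = n i" if i: "i \<in> {1..d}" for i
  proof -
    have "nD D i = sum_mset (image_mset (\<lambda>_. 1::nat) (filter_mset (\<lambda>x. fst x = i) D))"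
      unfolding nD_def by (rule size_eq_sum_mset)
    also have "\<dots> = (\<Sum>x\<in>{1..d} \<times> B. if fst x = i then count D x * 1 else 0)"
      by (rule filter_sum_S[OF fS setD])
    also have "\<dots> = (\<Sum>x\<in>{1..d} \<times> B. if fst x = i then N i (snd x) else 0)"
      by (rule sum.cong) (auto simp: cD)
    also have "\<dots> = (\<Sum>u\<in>B. N i u)" by (rule sum_S[OF fB i])
    also have "\<dots> = n i" using h7 i by (simp add: B_def)
    finally show ?thesis .
  qed
  have EDD: "int (ED D i j) = kprime n k i j" if i: "i \<in> {1..d}" and j: "j \<in> {1..d}" for i j
  proof -
    have "ED D i j = (\<Sum>x\<in>{1..d} \<times> B. if fst x = i then count D x * snd x j else 0)"
      unfolding ED_def by (rule filter_sum_S[OF fS setD])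
    also have "\<dots> = (\<Sum>x\<in>{1..d} \<times> B. if fst x = i then snd x j * N i (snd x) else 0)"
      by (rule sum.cong) (auto simp: cD)
    also have "\<dots> = (\<Sum>u\<in>B. u j * N i u)" by (rule sum_S[OF fB i])
    finally have "int (ED D i j) = (\<Sum>u\<in>B. int (u j * N i u))" by simp
    also have "\<dots> = kprime n k i j" using h8 i j by (simp add: B_def)
    finally show ?thesis .
  qed
  have npos: "n i \<ge> 1" if "i \<in> {1..d}" for i using h5 h6 that by fastforce
  have bal: "\<forall>j\<in>{1..d}. nD D j = r j + (\<Sum>i=1..d. ED D i j)"
  proof
    fix j assume j: "j \<in> {1..d}"
    have "int (\<Sum>i=1..d. ED D i j) = (\<Sum>i=1..d. kprime n k i j)"
      unfolding of_nat_sum by (rule sum.cong[OF refl]) (rule EDD, use j in auto)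
    also have "\<dots> = kprime n k j j + (\<Sum>i\<in>{1..d}-{j}. kprime n k i j)"
      using j by (simp add: sum.remove)
    also have "(\<Sum>i\<in>{1..d}-{j}. kprime n k i j) = (\<Sum>i\<in>{1..d}-{j}. k i j)"
      by (rule sum.cong) (auto simp: kprime_def)
    also have "kprime n k j j = int (n j) + k j j" by (simp add: kprime_def)
    finally have "int (\<Sum>i=1..d. ED D i j) = int (n j) - int (r j)" using h4 j by force
    thus "nD D j = r j + (\<Sum>i=1..d. ED D i j)" using nDD[OF j] by linarith
  qed
  have cls_eq: "forest_class d n r k N = cls d r D"
  proof (rule Set.set_eqI, rule iffI)
    fix F assume F: "F \<in> forest_class d n r k N"
    have wf: "wf_forest d F" and nv: "\<forall>i\<in>{1..d}. num_vertices_of_type F i = n i"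
      and rts: "\<forall>i\<in>{1..d}. num_roots_of_type F i = r i"
      and ind: "\<forall>i\<in>{1..d}. \<forall>u\<in>B. num_vertices_indeg F i u = N i u"
      using F by (auto simp: forest_class_def B_def)
    have "ivs F = D"
    proof (rule multiset_eqI)
      fix x :: "nat \<times> (nat \<Rightarrow> nat)"
      obtain i u where x: "x = (i,u)" by (cases x)
      show "count (ivs F) x = count D x"
      proof (cases "x \<in> {1..d} \<times> B")
        case True
        then show ?thesis using ind by (auto simp: x count_ivs cD)
      next
        case False
        have "x \<notin># ivs F"
        proof
          assume "x \<in># ivs F"
          then obtain v where v: "v \<in> set (vertices F)" and xv: "x = gv v" by (auto simp: ivs_def)
          have "root_type v \<in> {1..d}" by (rule vertex_props(1)[OF wf v])
          moreover have "indeg_type v \<in> B"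
          proof -
            have "indeg_type v j \<le> n j" if "j \<in> {1..d}" for j
              using vertex_props(3)[OF wf v, of j] nv that by simp
            thus ?thesis using vertex_props(2)[OF wf v] by (auto simp: B_def indeg_box_def)
          qed
          ultimately show False using False xv by (simp add: gv_def)
        qed
        then show ?thesis using False by (simp add: cD not_in_iff)
      qed
    qed
    moreover have "\<forall>j\<in>{1..d}. length (blk F j) = r j"
      using rts by (simp add: num_roots_of_type_def blk_def)
    ultimately show "F \<in> cls d r D" using wf by (simp add: cls_def)
  next
    fix F assume F: "F \<in> cls d r D"
    have wf: "wf_forest d F" and rts: "\<forall>j\<in>{1..d}. length (blk F j) = r j" and iv: "ivs F = D"
      using F by (auto simp: cls_def)
    have "\<forall>i\<in>{1..d}. num_vertices_of_type F i = n i" using nDD by (simp add: nD_ivs[symmetric] iv)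
    moreover have "\<forall>i\<in>{1..d}. num_roots_of_type F i = r i"
      using rts by (simp add: num_roots_of_type_def blk_def)
    moreover have "\<forall>i\<in>{1..d}. \<forall>j\<in>{1..d}. i \<noteq> j \<longrightarrow> int (num_edges F i j) = k i j"
      using EDD by (simp add: ED_ivs[symmetric] iv kprime_def)
    moreover have "\<forall>i\<in>{1..d}. \<forall>u\<in>indeg_box d n. num_vertices_indeg F i u = N i u"
      by (simp add: count_ivs[symmetric] iv cD B_def)
    ultimately show "F \<in> forest_class d n r k N" using wf by (simp add: forest_class_def)
  qed
  have Mteq: "Mt d (nD D) (ED D) = mat d d (\<lambda>(i, j). - k (i + 1) (j + 1))"
  proof (rule eq_matI)
    fix i j assume i: "i < dim_row (mat d d (\<lambda>(i, j). - k (i + 1) (j + 1)))"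
      and j: "j < dim_col (mat d d (\<lambda>(i, j). - k (i + 1) (j + 1)))"
    have i': "Suc i \<in> {1..d}" and j': "Suc j \<in> {1..d}" using i j by auto
    show "Mt d (nD D) (ED D) $$ (i, j) = mat d d (\<lambda>(i, j). - k (i + 1) (j + 1)) $$ (i, j)"
      using i j EDD[OF i' j'] nDD[OF i'] npos[OF i'] by (auto simp: Mt_index kprime_def)
  qed auto
  have prodeq: "(\<Prod>j=1..d. (fact (nD D j - 1) :: int)) = (\<Prod>j=1..d. fact (n j - 1))"
    by (rule prod.cong) (auto simp: nDD)
  have Pfeq: "Pf D = (\<Prod>i=1..d. \<Prod>u\<in>B. fact (N i u))"
  proof -
    have "Pf D = (\<Prod>x\<in>{1..d} \<times> B. fact (count D x))"
      unfolding Pf_def by (rule prod.mono_neutral_left) (use fS setD in \<open>auto simp: not_in_iff\<close>)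
    also have "\<dots> = (\<Prod>x\<in>{1..d} \<times> B. fact (N (fst x) (snd x)))"
      by (rule prod.cong) (auto simp: cD)
    also have "\<dots> = (\<Prod>i=1..d. \<Prod>u\<in>B. fact (N i u))"
      by (simp add: prod.cartesian_product case_prod_beta)
    finally show ?thesis .
  qed
  have mc: "int (card (cls d r D) * Pf D) = (\<Prod>j=1..d. fact (n j - 1)) * det (mat d d (\<lambda>(i, j). - k (i + 1) (j + 1)))"
    using main_count[OF valid bal] prodeq Mteq by simp
  hence "real (card (cls d r D) * Pf D) = real_of_int ((\<Prod>j=1..d. fact (n j - 1)) * det (mat d d (\<lambda>(i, j). - k (i + 1) (j + 1))))"
    by (metis of_int_of_nat_eq)
  hence eq: "real (card (cls d r D)) * real (Pf D) = (\<Prod>j=1..d. fact (n j - 1)) * real_of_int (det (mat d d (\<lambda>(i, j). - k (i + 1) (j + 1))))"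
    by (simp add: of_int_prod)
  have Pfr: "real (Pf D) = (\<Prod>i=1..d. \<Prod>u\<in>indeg_box d n. fact (N i u))"
    by (simp add: Pfeq B_def of_nat_prod)
  have Ppos: "real (Pf D) > 0" unfolding Pfr by (intro prod_pos) auto
  show ?thesis using eq Ppos unfolding cls_eq Pfr[symmetric] by (simp add: field_simps)
qed

end
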